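(* On the triangle graph on $\{0,1,2\}$ over $\mathbb{F}_2$, let $\nabla$ be the curved QLC determined by $\nabla e^+=e^-\otimes e^-$, $\nabla e^-=e^+\otimes e^+$, viewed as a map $P(\mathrm{Arr})\to P(\mathrm{Arr}^{(2)})$. Define its de Morgan dual connection by $\bar\nabla\omega=\mathrm{Arr}^{(2)}\setminus\nabla(\mathrm{Arr}\setminus\omega)$. Then $\bar\nabla\omega=\nabla\omega\oplus g$ for all $\omega\subseteq\mathrm{Arr}$, where $g=\{0\to1\to0,\ 0\to2\to0,\ 1\to0\to1,\ 1\to2\to1,\ 2\to0\to2,\ 2\to1\to2\}$ is the quantum metric.
   Context: $A=\mathbb{F}_2(\{0,1,2\})$; $\mathrm{Arr}=\{i\to j: i\ne j\}$ (all six arrows), $\mathrm{Arr}^{(2)}$ the set of 2-step paths $x\to y\to z$ along arrows. Over $\mathbb{F}_2$, 1-forms are identified with subsets of $\mathrm{Arr}$ (sum = symmetric difference $\oplus$) and $\Omega^1\otimes_A\Omega^1$ with subsets of $\mathrm{Arr}^{(2)}$, where $(x\to y)\otimes(y'\to z)$ is the path $x\to y\to z$ if $y=y'$ and $0=\emptyset$ otherwise. The bimodule structure is $f\cdot(x\to y)\cdot h=f(x)h(y)(x\to y)$ and ${\rm d} f=\sum_{x\to y}(f(y)+f(x))x\to y$. $e^+=\{0\to1,1\to2,2\to0\}$, $e^-=\{1\to0,2\to1,0\to2\}$. The connection is extended from $e^\pm$ to all 1-forms by $\nabla(f\omega)={\rm d} f\otimes\omega+f\nabla\omega$ (it is additive).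 *)

theory Defs
  imports Main
begin

text \<open>Vertices of the triangle graph, functions A = F_2({0,1,2}) as V => bool
 (True = 1 in F_2), 1-forms as subsets of Arr, elements of Omega^1 (x)_A Omega^1
 as subsets of Arr^(2); sum in F_2 = symmetric difference.\<close>

datatype V = V0 | V1 | V2

type_synonym arrow = "V \<times> V"
type_synonym path2 = "V \<times> V \<times> V"

definition Arr :: "arrow set" where
  "Arr = {(x, y). x \<noteq> y}"

definition Arr2 :: "path2 set" where
  "Arr2 = {(x, y, z). x \<noteq> y \<and> y \<noteq> z}"

definition symdiff :: "'a set \<Rightarrow> 'a set \<Rightarrow> 'a set" (infixl "\<oplus>" 65) where
  "A \<oplus> B = (A - B) \<union> (B - A)"

text \<open>(x->y) (x) (y'->z) = x->y->z if y = y', else 0; extended bilinearly.\<close>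
definition tens :: "arrow set \<Rightarrow> arrow set \<Rightarrow> path2 set" where
  "tens \<omega> \<eta> = {(x, y, z). (x, y) \<in> \<omega> \<and> (y, z) \<in> \<eta>}"

definition lmul1 :: "(V \<Rightarrow> bool) \<Rightarrow> arrow set \<Rightarrow> arrow set" where
  "lmul1 f \<omega> = {(x, y). (x, y) \<in> \<omega> \<and> f x}"

definition lmul2 :: "(V \<Rightarrow> bool) \<Rightarrow> path2 set \<Rightarrow> path2 set" where
  "lmul2 f P = {(x, y, z). (x, y, z) \<in> P \<and> f x}"

text \<open>d f = sum over arrows x->y of (f y + f x) x->y\<close>
definition dd :: "(V \<Rightarrow> bool) \<Rightarrow> arrow set" where
  "dd f = {(x, y). (x, y) \<in> Arr \<and> f x \<noteq> f y}"

definition eplus :: "arrow set" where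
  "eplus = {(V0, V1), (V1, V2), (V2, V0)}"

definition eminus :: "arrow set" where
  "eminus = {(V1, V0), (V2, V1), (V0, V2)}"

definition gmetric :: "path2 set" where
  "gmetric = {(V0, V1, V0), (V0, V2, V0), (V1, V0, V1), (V1, V2, V1), (V2, V0, V2), (V2, V1, V2)}"

definition is_conn :: "(arrow set \<Rightarrow> path2 set) \<Rightarrow> bool" where
  "is_conn nabla \<longleftrightarrow>
     (\<forall>\<omega> \<eta>. \<omega> \<subseteq> Arr \<longrightarrow> \<eta> \<subseteq> Arr \<longrightarrow> nabla (\<omega> \<oplus> \<eta>) = nabla \<omega> \<oplus> nabla \<eta>) \<and>
     (\<forall>f \<omega>. \<omega> \<subseteq> Arr \<longrightarrow> nabla (lmul1 f \<omega>) = tens (dd f) \<omega> \<oplus> lmul2 f (nabla \<omega>)) \<and>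
     nabla eplus = tens eminus eminus \<and>
     nabla eminus = tens eplus eplus"

definition demorgan_dual :: "(arrow set \<Rightarrow> path2 set) \<Rightarrow> arrow set \<Rightarrow> path2 set" where
  "demorgan_dual nabla \<omega> = Arr2 - nabla (Arr - \<omega>)"

end

theory Submission
  imports Defs
begin

lemma V_all: "(\<forall>x::V. P x) = (P V0 \<and> P V1 \<and> P V2)"
  by (metis V.exhaust)

lemma sub_Arr2:
  assumes c: "is_conn nabla" and w: "\<omega> \<subseteq> Arr"
  shows "nabla \<omega> \<subseteq> Arr2"
proof -
  have add: "\<And>a b. a \<subseteq> Arr \<Longrightarrow> b \<subseteq> Arr \<Longrightarrow> nabla (a \<oplus> b) = nabla a \<oplus> nabla b"
   and leib: "\<And>f a. a \<subseteq> Arr \<Longrightarrow> nabla (lmul1 f a) = tens (dd f) a \<oplus> lmul2 f (nabla a)"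
   and ep: "nabla eplus = tens eminus eminus" and em: "nabla eminus = tens eplus eplus"
    using c unfolding is_conn_def by auto
  define f where "f = (\<lambda>x. (x, case x of V0 \<Rightarrow> V1 | V1 \<Rightarrow> V2 | V2 \<Rightarrow> V0) \<in> \<omega>)"
  define h where "h = (\<lambda>x. (x, case x of V0 \<Rightarrow> V2 | V1 \<Rightarrow> V0 | V2 \<Rightarrow> V1) \<in> \<omega>)"
  have EA: "eplus \<subseteq> Arr" "eminus \<subseteq> Arr" by (auto simp: eplus_def eminus_def Arr_def)
  have L: "lmul1 f eplus \<subseteq> Arr" "lmul1 h eminus \<subseteq> Arr"
    by (auto simp: eplus_def eminus_def Arr_def lmul1_def)
  have dec: "\<omega> = lmul1 f eplus \<oplus> lmul1 h eminus"
  proof (rule set_eqI)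
    fix p :: arrow
    obtain x y where p: "p = (x, y)" by fastforce
    show "p \<in> \<omega> \<longleftrightarrow> p \<in> lmul1 f eplus \<oplus> lmul1 h eminus"
      using w unfolding p
      by (cases x; cases y) (auto simp: f_def h_def lmul1_def eplus_def eminus_def symdiff_def Arr_def)
  qed
  have "nabla \<omega> = (tens (dd f) eplus \<oplus> lmul2 f (tens eminus eminus)) \<oplus>
                   (tens (dd h) eminus \<oplus> lmul2 h (tens eplus eplus))"
    by (subst dec, simp add: add[OF L] leib[OF EA(1)] leib[OF EA(2)] ep em)
  also have "\<dots> \<subseteq> Arr2"
    by (auto simp: symdiff_def tens_def lmul2_def dd_def Arr_def Arr2_def eplus_def eminus_def)
  finally show ?thesis .
qed

theorem lemma4p9:
  fixes nabla :: "arrow set \<Rightarrow> path2 set"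
  assumes "is_conn nabla"
  shows "\<forall>\<omega>. \<omega> \<subseteq> Arr \<longrightarrow> demorgan_dual nabla \<omega> = nabla \<omega> \<oplus> gmetric"
proof (intro allI impI)
  fix \<omega> :: "arrow set" assume w: "\<omega> \<subseteq> Arr"
  have add: "\<And>a b. a \<subseteq> Arr \<Longrightarrow> b \<subseteq> Arr \<Longrightarrow> nabla (a \<oplus> b) = nabla a \<oplus> nabla b"
   and ep: "nabla eplus = tens eminus eminus" and em: "nabla eminus = tens eplus eplus"
    using assms unfolding is_conn_def by auto
  have EA: "eplus \<subseteq> Arr" "eminus \<subseteq> Arr" by (auto simp: eplus_def eminus_def Arr_def)
  have AE: "Arr = eplus \<oplus> eminus"
  proof (rule set_eqI)
    fix p :: arrow
    obtain x y where p: "p = (x, y)" by fastforce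
    show "p \<in> Arr \<longleftrightarrow> p \<in> eplus \<oplus> eminus" unfolding p
      by (cases x; cases y) (auto simp: eplus_def eminus_def symdiff_def Arr_def)
  qed
  have NA: "nabla Arr = tens eminus eminus \<oplus> tens eplus eplus"
    by (subst AE, simp add: add[OF EA] ep em)
  have G: "Arr2 \<oplus> nabla Arr = gmetric"
  proof (rule set_eqI)
    fix p :: path2
    obtain x y z where p: "p = (x, y, z)" by (cases p) fastforce
    show "p \<in> Arr2 \<oplus> nabla Arr \<longleftrightarrow> p \<in> gmetric" unfolding p NA
      by (cases x; cases y; cases z) (auto simp: eplus_def eminus_def symdiff_def Arr2_def tens_def gmetric_def)
  qed
  have A: "Arr - \<omega> \<subseteq> Arr" by auto
  have S: "(Arr - \<omega>) \<oplus> \<omega> = Arr" using w by (auto simp: symdiff_def)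
  have NA2: "nabla Arr = nabla (Arr - \<omega>) \<oplus> nabla \<omega>"
    using add[OF A w] S by simp
  have sub: "nabla (Arr - \<omega>) \<subseteq> Arr2" using sub_Arr2[OF assms A] .
  show "demorgan_dual nabla \<omega> = nabla \<omega> \<oplus> gmetric"
    unfolding demorgan_dual_def G[symmetric] NA2 using sub
    by (auto simp: symdiff_def)
qed

end
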